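(* Let $n\geq2$, $A\in\mathrm{SL}_n(\mathbb Z)$, $B=(b_{ij})\in M_n(\mathbb R)$ with $\exp(B)=A$, and $M=\Gamma\backslash G(B)$ as in the context. Let $g$ be a homogeneous metric on $M$ for which $(V_1,\dots,V_n,Y)$ is an orthonormal frame, where $V_1,\dots,V_n$ is a basis of the space of left-invariant vertical fields $\mathrm{span}(X_1,\dots,X_n)$, let $C$ be the matrix of the endomorphism $f:X\mapsto[Y,X]$ of $\mathrm{span}(X_1,\dots,X_n)$ in the basis $(V_1,\dots,V_n)$, and let $a$ be the supremum of the absolute value of the sectional curvature of $(M,g)$. There exist constants $\tau(n)>0$ and $\kappa(B)$ such that $$\tau^{-1}a\leq \operatorname{Tr}(C\,{}^tC)\leq\tau a+\kappa.$$
   Context: $G=G(B)$ is the image of $(x_1,\dots,x_n,y)\in\mathbb R^{n+1}\mapsto\begin{pmatrix}\exp(yB)&0&x\\0&1&y\\0&0&1\end{pmatrix}\in\mathrm{GL}_{n+2}(\mathbb R)$ (blocks of sizes $n,1,1$), $\Gamma$ is the image of $\mathbb Z^{n+1}$. $X_1,\dots,X_n,Y$ are the left-invariant fields on $G$ (descending to $M$) generated at the identity by $\partial/\partial x_i,\partial/\partial y$; they satisfy $[X_i,X_j]=0$, $[Y,X_i]=\sum_j b_{ji}X_j$, so $f$ has matrix $B$ in the basis $(X_i)$. A homogeneous metric is one induced by a left-invariant metric on $G$. *)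

theory Defs
  imports "HOL-Analysis.Analysis"
begin

definition mat_pow :: "real^'n^'n \<Rightarrow> nat \<Rightarrow> real^'n^'n" where
  "mat_pow M k = ((\<lambda>X. X ** M) ^^ k) (mat 1)"

definition mat_exp :: "real^'n^'n \<Rightarrow> real^'n^'n" where
  "mat_exp M = (\<Sum>k. (1 / fact k) *\<^sub>R mat_pow M k)"

definition in_SL_Z :: "real^'n^'n \<Rightarrow> bool" where
  "in_SL_Z A \<longleftrightarrow> (\<forall>i j. A $ i $ j \<in> \<int>) \<and> det A = 1"

text \<open>br is the Lie bracket of left-invariant fields, g the (constant) inner product.
  Levi-Civita connection on left-invariant fields via the Koszul formula.\<close>

definition lc_conn :: "('v::real_vector \<Rightarrow> 'v \<Rightarrow> 'v) \<Rightarrow> ('v \<Rightarrow> 'v \<Rightarrow> real) \<Rightarrow> 'v \<Rightarrow> 'v \<Rightarrow> 'v" where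
  "lc_conn br g X Y =
     (THE W. \<forall>Z. g W Z = (g (br X Y) Z - g (br Y Z) X + g (br Z X) Y) / 2)"

definition curv_tensor :: "('v::real_vector \<Rightarrow> 'v \<Rightarrow> 'v) \<Rightarrow> ('v \<Rightarrow> 'v \<Rightarrow> real) \<Rightarrow> 'v \<Rightarrow> 'v \<Rightarrow> 'v \<Rightarrow> 'v" where
  "curv_tensor br g X Y Z =
     lc_conn br g X (lc_conn br g Y Z) - lc_conn br g Y (lc_conn br g X Z)
     - lc_conn br g (br X Y) Z"

definition sec_curv :: "('v::real_vector \<Rightarrow> 'v \<Rightarrow> 'v) \<Rightarrow> ('v \<Rightarrow> 'v \<Rightarrow> real) \<Rightarrow> 'v \<Rightarrow> 'v \<Rightarrow> real" where
  "sec_curv br g X Y = g (curv_tensor br g X Y Y) X / (g X X * g Y Y - (g X Y)^2)"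

definition sup_abs_sec_curv :: "('v::real_vector \<Rightarrow> 'v \<Rightarrow> 'v) \<Rightarrow> ('v \<Rightarrow> 'v \<Rightarrow> real) \<Rightarrow> real" where
  "sup_abs_sec_curv br g =
     Sup {\<bar>sec_curv br g X Y\<bar> | X Y. g X X * g Y Y - (g X Y)^2 \<noteq> 0}"

text \<open>An element (x, s) stands for x_1 X_1 + ... + x_n X_n + s Y.
  [X_i,X_j] = 0 and [Y, X_i] = sum_j b_ji X_j, i.e. [Y, x] = B *v x.\<close>
definition solv_bracket :: "real^'n^'n \<Rightarrow> ((real^'n) \<times> real) \<Rightarrow> ((real^'n) \<times> real) \<Rightarrow> ((real^'n) \<times> real)" where
  "solv_bracket B u w = (snd u *\<^sub>R (B *v fst w) - snd w *\<^sub>R (B *v fst u), 0)"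

definition frame_matrix :: "('n \<Rightarrow> real^'n) \<Rightarrow> real^'n^'n" where
  "frame_matrix V = (\<chi> i j. V j $ i)"

text \<open>The left-invariant metric for which (V_1,...,V_n,Y) is orthonormal.\<close>
definition frame_metric :: "('n::finite \<Rightarrow> real^'n) \<Rightarrow> ((real^'n) \<times> real) \<Rightarrow> ((real^'n) \<times> real) \<Rightarrow> real" where
  "frame_metric V u w =
     (matrix_inv (frame_matrix V) *v fst u) \<bullet> (matrix_inv (frame_matrix V) *v fst w)
     + snd u * snd w"

end

theory Submission
  imports Defs
begin

definition Sm :: "real^'n^'n \<Rightarrow> real^'n^'n" where "Sm C = (1/2) *\<^sub>R (C + transpose C)"
definition Km :: "real^'n^'n \<Rightarrow> real^'n^'n" where "Km C = (1/2) *\<^sub>R (C - transpose C)"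

definition nab :: "real^'n^'n \<Rightarrow> ((real^'n) \<times> real) \<Rightarrow> ((real^'n) \<times> real) \<Rightarrow> ((real^'n) \<times> real)" where
  "nab C U W = (snd U *\<^sub>R (Km C *v fst W) - snd W *\<^sub>R (Sm C *v fst U), inner (fst U) (Sm C *v fst W))"

lemma inner_transpose: "inner (x::real^'n) (y v* C) = inner y (C *v x)"
  by (metis dot_lmul_matrix inner_commute)

lemma inner_Sm: "inner x (Sm C *v y) = (inner x (C *v y) + inner y (C *v x)) / 2"
  unfolding Sm_def
  by (simp add: scaleR_matrix_vector_assoc[symmetric] matrix_vector_mult_add_rdistrib inner_add_right inner_transpose)

lemma inner_Km: "inner x (Km C *v y) = (inner x (C *v y) - inner y (C *v x)) / 2"
  unfolding Km_def
  by (simp add: scaleR_matrix_vector_assoc[symmetric] matrix_vector_mult_diff_rdistrib inner_diff_right inner_transpose)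

lemma inner_mv_comm: "inner (A *v x) y = inner y (A *v x)"
  by (rule inner_commute)

lemma inner_Sm_l: "inner (Sm C *v y) x = (inner x (C *v y) + inner y (C *v x)) / 2"
  by (simp add: inner_commute[of "Sm C *v y"] inner_Sm)
lemma inner_Km_l: "inner (Km C *v y) x = (inner x (C *v y) - inner y (C *v x)) / 2"
  by (simp add: inner_commute[of "Km C *v y"] inner_Km)

lemma koszul_aux:
  fixes s t r a b c d e f :: real
  shows "2 * (s*((a - b)/2) - t*((c + d)/2) + inner ((e + f)/2) r) = s*a - t*c + 0 - (t*d - r*e + 0) + (r*f - s*b + 0)"
  by (simp add: field_simps)

lemma koszul_C:
  "2 * inner (nab C U W) Z = inner (solv_bracket C U W) Z - inner (solv_bracket C W Z) U + inner (solv_bracket C Z U) W"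
proof -
  obtain x s where U: "U = (x,s)" by fastforce
  obtain y t where W: "W = (y,t)" by fastforce
  obtain z r where Z: "Z = (z,r)" by fastforce
  show ?thesis unfolding U W Z nab_def solv_bracket_def
    apply (simp only: fst_conv snd_conv inner_Pair inner_diff_left inner_diff_right inner_scaleR_left inner_scaleR_right
        inner_zero_left inner_zero_right inner_Sm inner_Km inner_Sm_l inner_Km_l inner_commute[of "C *v _"])
    by (rule koszul_aux)
qed

lemma half_eq: "2 * (a::real) = k \<Longrightarrow> a = k / 2" by simp

lemma lc_C: "lc_conn (solv_bracket C) inner U W = nab C U W"
  unfolding lc_conn_def
proof (rule the_equality)
  show "\<forall>Z. inner (nab C U W) Z = (inner (solv_bracket C U W) Z - inner (solv_bracket C W Z) U + inner (solv_bracket C Z U) W) / 2"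
  proof
    fix Z show "inner (nab C U W) Z = (inner (solv_bracket C U W) Z - inner (solv_bracket C W Z) U + inner (solv_bracket C Z U) W) / 2"
      by (rule half_eq[OF koszul_C])
  qed
next
  fix N assume h: "\<forall>Z. inner N Z = (inner (solv_bracket C U W) Z - inner (solv_bracket C W Z) U + inner (solv_bracket C Z U) W) / 2"
  have e: "inner N Z = inner (nab C U W) Z" for Z
    using h[rule_format, of Z] half_eq[OF koszul_C[of C U W Z]] by (rule trans[OF _ sym])
  have "inner (N - nab C U W) (N - nab C U W) = 0" by (simp only: inner_diff_left e)
  then show "N = nab C U W" by simp
qed

lemma lc_transfer:
  fixes \<Phi> :: "'a::real_vector \<Rightarrow> 'b::real_inner" and \<Psi> :: "'b \<Rightarrow> 'a"
  assumes inv1: "\<And>x. \<Psi> (\<Phi> x) = x" and inv2: "\<And>y. \<Phi> (\<Psi> y) = y"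
    and g: "\<And>u w. g u w = inner (\<Phi> u) (\<Phi> w)"
    and br: "\<And>u w. \<Phi> (br u w) = br' (\<Phi> u) (\<Phi> w)"
    and ex: "\<And>Z. inner N Z = (inner (br' (\<Phi> X) (\<Phi> Y)) Z - inner (br' (\<Phi> Y) Z) (\<Phi> X) + inner (br' Z (\<Phi> X)) (\<Phi> Y)) / 2"
  shows "lc_conn br g X Y = \<Psi> N"
  unfolding lc_conn_def
proof (rule the_equality)
  show "\<forall>Z. g (\<Psi> N) Z = (g (br X Y) Z - g (br Y Z) X + g (br Z X) Y) / 2"
    by (simp add: g br inv2 ex)
next
  fix W assume h: "\<forall>Z. g W Z = (g (br X Y) Z - g (br Y Z) X + g (br Z X) Y) / 2"
  have e: "inner (\<Phi> W) Z' = inner N Z'" for Z'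
    using h[rule_format, of "\<Psi> Z'"] by (simp add: g br inv2 ex)
  have "inner (\<Phi> W - N) (\<Phi> W - N) = 0" by (simp add: inner_diff_left e)
  then have "\<Phi> W = N" by simp
  then show "W = \<Psi> N" using inv1 by metis
qed

lemma sec_transfer:
  fixes \<Phi> :: "'a::real_vector \<Rightarrow> 'b::real_inner" and \<Psi> :: "'b \<Rightarrow> 'a"
  assumes inv2: "\<And>y. \<Phi> (\<Psi> y) = y"
    and g: "\<And>u w. g u w = inner (\<Phi> u) (\<Phi> w)"
    and br: "\<And>u w. \<Phi> (br u w) = br' (\<Phi> u) (\<Phi> w)"
    and add: "\<And>a b. \<Phi> (a - b) = \<Phi> a - \<Phi> b"
    and lc: "\<And>X Y. lc_conn br g X Y = \<Psi> (lc_conn br' inner (\<Phi> X) (\<Phi> Y))"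
  shows "sec_curv br g X Y = sec_curv br' inner (\<Phi> X) (\<Phi> Y)"
proof -
  have "\<Phi> (curv_tensor br g X Y Z) = curv_tensor br' inner (\<Phi> X) (\<Phi> Y) (\<Phi> Z)" for Z
    unfolding curv_tensor_def by (simp add: add lc inv2 br)
  then show ?thesis unfolding sec_curv_def by (simp add: g)
qed

lemma sup_transfer:
  fixes \<Phi> :: "'a::real_vector \<Rightarrow> 'b::real_inner" and \<Psi> :: "'b \<Rightarrow> 'a"
  assumes inv2: "\<And>y. \<Phi> (\<Psi> y) = y"
    and g: "\<And>u w. g u w = inner (\<Phi> u) (\<Phi> w)"
    and sec: "\<And>X Y. sec_curv br g X Y = sec_curv br' inner (\<Phi> X) (\<Phi> Y)"
  shows "sup_abs_sec_curv br g = sup_abs_sec_curv br' inner"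
proof -
  have "{\<bar>sec_curv br g X Y\<bar> | X Y. g X X * g Y Y - (g X Y)^2 \<noteq> 0}
      = {\<bar>sec_curv br' inner X Y\<bar> | X Y. inner X X * inner Y Y - (inner X Y)^2 \<noteq> 0}"
  proof (intro equalityI subsetI)
    fix r assume "r \<in> {\<bar>sec_curv br g X Y\<bar> | X Y. g X X * g Y Y - (g X Y)^2 \<noteq> 0}"
    then obtain X Y where "r = \<bar>sec_curv br g X Y\<bar>" "g X X * g Y Y - (g X Y)^2 \<noteq> 0" by blast
    then show "r \<in> {\<bar>sec_curv br' inner X Y\<bar> | X Y. inner X X * inner Y Y - (inner X Y)^2 \<noteq> 0}"
      by (auto simp: sec g)
  next
    fix r assume "r \<in> {\<bar>sec_curv br' inner X Y\<bar> | X Y. inner X X * inner Y Y - (inner X Y)^2 \<noteq> 0}"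
    then obtain X Y where "r = \<bar>sec_curv br' inner X Y\<bar>" "inner X X * inner Y Y - (inner X Y)^2 \<noteq> 0" by blast
    then show "r \<in> {\<bar>sec_curv br g X Y\<bar> | X Y. g X X * g Y Y - (g X Y)^2 \<noteq> 0}"
      unfolding mem_Collect_eq apply (rule_tac x="\<Psi> X" in exI, rule_tac x="\<Psi> Y" in exI)
      by (simp add: sec g inv2)
  qed
  then show ?thesis unfolding sup_abs_sec_curv_def by simp
qed

lemma nab_diff1: "nab C (U1 - U2) W = nab C U1 W - nab C U2 W"
  unfolding nab_def by (simp add: prod_eq_iff algebra_simps inner_diff_left)
lemma nab_diff2: "nab C U (W1 - W2) = nab C U W1 - nab C U W2"
  unfolding nab_def by (simp add: prod_eq_iff algebra_simps inner_diff_right)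
lemma nab_scale1: "nab C (c *\<^sub>R U) W = c *\<^sub>R nab C U W"
  unfolding nab_def by (simp add: prod_eq_iff algebra_simps)
lemma nab_scale2: "nab C U (c *\<^sub>R W) = c *\<^sub>R nab C U W"
  unfolding nab_def by (simp add: prod_eq_iff algebra_simps)
lemma nab_zero1: "nab C 0 W = 0"
  unfolding nab_def by (simp add: prod_eq_iff)
lemma br_diff2: "solv_bracket C U (W1 - W2) = solv_bracket C U W1 - solv_bracket C U W2"
  unfolding solv_bracket_def by (simp add: prod_eq_iff algebra_simps)
lemma br_scale2: "solv_bracket C U (c *\<^sub>R W) = c *\<^sub>R solv_bracket C U W"
  unfolding solv_bracket_def by (simp add: prod_eq_iff algebra_simps)
lemma br_self: "solv_bracket C U U = 0"
  unfolding solv_bracket_def by (simp add: prod_eq_iff)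

lemma skew_aux:
  fixes s t r a b c d e f :: real
  shows "s*((a-b)/2) - t*((c+d)/2) + inner ((e+f)/2) r = -(s*((b-a)/2) - r*((f+e)/2) + inner t ((d+c)/2))"
  by (simp add: field_simps)

lemma nab_skew: "inner (nab C U W) Z = - inner W (nab C U Z)"
proof -
  obtain x s where U: "U = (x,s)" by fastforce
  obtain y t where W: "W = (y,t)" by fastforce
  obtain z r where Z: "Z = (z,r)" by fastforce
  show ?thesis unfolding U W Z nab_def
    apply (simp only: fst_conv snd_conv inner_Pair inner_diff_left inner_diff_right inner_scaleR_left inner_scaleR_right
        inner_zero_left inner_zero_right inner_Sm inner_Km inner_Sm_l inner_Km_l inner_commute[of "C *v _"])
    by (rule skew_aux)
qed

definition Rc where "Rc C X Y Z = curv_tensor (solv_bracket C) inner X Y Z"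

lemma Rc_eq: "Rc C X Y Z = nab C X (nab C Y Z) - nab C Y (nab C X Z) - nab C (solv_bracket C X Y) Z"
  unfolding Rc_def curv_tensor_def lc_C ..

lemma Rc_self: "Rc C X X Z = 0"
  unfolding Rc_eq by (simp add: br_self nab_zero1)

lemma Rc_skew: "inner (Rc C X Y Z) Z = 0"
proof -
  have "inner (nab C (solv_bracket C X Y) Z) Z = 0" using nab_skew[of C _ Z Z] by (simp add: inner_commute)
  moreover have "inner (nab C X (nab C Y Z)) Z = - inner (nab C Y Z) (nab C X Z)" by (rule nab_skew)
  moreover have "inner (nab C Y (nab C X Z)) Z = - inner (nab C X Z) (nab C Y Z)" by (rule nab_skew)
  ultimately show ?thesis unfolding Rc_eq
    by (simp only: inner_diff_left) (simp add: inner_commute)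
qed

lemma Rc_lin2: "Rc C X (Y - c *\<^sub>R X) Z = Rc C X Y Z - c *\<^sub>R Rc C X X Z"
  unfolding Rc_eq by (simp add: nab_diff1 nab_diff2 nab_scale1 nab_scale2 br_diff2 br_scale2 br_self nab_zero1 algebra_simps)

lemma Rc_lin3: "Rc C X Y (Z - c *\<^sub>R X) = Rc C X Y Z - c *\<^sub>R Rc C X Y X"
  unfolding Rc_eq by (simp add: nab_diff1 nab_diff2 nab_scale1 nab_scale2 algebra_simps)

lemma Rm_gs: "inner (Rc C X (Y - c *\<^sub>R X) (Y - c *\<^sub>R X)) X = inner (Rc C X Y Y) X"
  by (simp add: Rc_lin2 Rc_self Rc_lin3 inner_diff_left Rc_skew)

lemma trace_AAT: "trace (A ** transpose A) = (\<Sum>i\<in>UNIV. (norm ((A::real^'n^'n) $ i))^2)"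
  by (simp add: trace_def matrix_matrix_mult_def transpose_def power2_norm_eq_inner inner_vec_def)

lemma trace_AAT_nonneg: "trace (A ** transpose (A::real^'n^'n)) \<ge> 0"
  unfolding trace_AAT by (simp add: sum_nonneg)

lemma norm_sq_vec: "(norm (v::real^'n))^2 = (\<Sum>i\<in>UNIV. (v$i)^2)"
  unfolding power2_norm_eq_inner inner_vec_def inner_real_def by (simp only: power2_eq_square)

lemma frob: "norm ((A::real^'n^'n) *v x) \<le> sqrt (trace (A ** transpose A)) * norm x"
proof -
  have ci: "(A *v x) $ i = inner (A$i) x" for i by (simp add: matrix_mult_dot)
  have "(norm (A *v x))^2 = (\<Sum>i\<in>UNIV. (inner (A$i) x)^2)"
    by (simp only: norm_sq_vec ci)
  also have "\<dots> \<le> (\<Sum>i\<in>UNIV. (norm (A$i))^2 * (norm x)^2)"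
  proof (rule sum_mono)
    fix i
    have "\<bar>inner (A$i) x\<bar> \<le> norm (A$i) * norm x" by (rule Cauchy_Schwarz_ineq2)
    then have "\<bar>inner (A$i) x\<bar>^2 \<le> (norm (A$i) * norm x)^2"
      by (rule power_mono) simp
    then show "(inner (A$i) x)^2 \<le> (norm (A$i))^2 * (norm x)^2" by (simp only: power2_abs power_mult_distrib)
  qed
  also have "\<dots> = trace (A ** transpose A) * (norm x)^2"
    by (simp only: trace_AAT sum_distrib_right)
  also have "\<dots> = (sqrt (trace (A ** transpose A)) * norm x)^2"
    using trace_AAT_nonneg[of A] by (simp only: power_mult_distrib real_sqrt_pow2)
  finally have "(norm (A *v x))^2 \<le> (sqrt (trace (A ** transpose A)) * norm x)^2" .
  then show ?thesis
    by (rule power2_le_imp_le) (simp add: trace_AAT_nonneg)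
qed

definition nC :: "real^'n^'n \<Rightarrow> real" where "nC C = sqrt (trace (C ** transpose C))"

lemma nC_nonneg: "nC C \<ge> 0" unfolding nC_def by (rule real_sqrt_ge_zero[OF trace_AAT_nonneg])

lemma frob1: "norm (C *v x) \<le> nC C * norm x" unfolding nC_def by (rule frob)
lemma frobT: "norm (transpose C *v x) \<le> nC C * norm x"
proof -
  have e: "trace (transpose C ** transpose (transpose C)) = trace (C ** transpose C)"
    by (simp only: transpose_transpose trace_mul_sym[of "transpose C" C])
  show ?thesis using frob[of "transpose C" x] unfolding nC_def e .
qed

lemma Sm_bd: "norm (Sm C *v x) \<le> nC C * norm x"
proof -
  have "Sm C *v x = (1/2) *\<^sub>R (C *v x + transpose C *v x)"
    unfolding Sm_def by (simp add: scaleR_matrix_vector_assoc[symmetric] matrix_vector_mult_add_rdistrib)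
  then have "norm (Sm C *v x) \<le> (1/2) * (norm (C *v x) + norm (transpose C *v x))"
    by (simp add: norm_triangle_ineq)
  then have "norm (Sm C *v x) \<le> 1/2 * norm (C *v x) + 1/2 * norm (transpose C *v x)"
    by (simp only: distrib_left)
  then show ?thesis using frob1[of C x] frobT[of C x] by linarith
qed

lemma Km_bd: "norm (Km C *v x) \<le> nC C * norm x"
proof -
  have "Km C *v x = (1/2) *\<^sub>R (C *v x - transpose C *v x)"
    unfolding Km_def by (simp add: scaleR_matrix_vector_assoc[symmetric] matrix_vector_mult_diff_rdistrib)
  then have "norm (Km C *v x) \<le> (1/2) * (norm (C *v x) + norm (transpose C *v x))"
    by (simp add: norm_triangle_ineq4)
  then have "norm (Km C *v x) \<le> 1/2 * norm (C *v x) + 1/2 * norm (transpose C *v x)"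
    by (simp only: distrib_left)
  then show ?thesis using frob1[of C x] frobT[of C x] by linarith
qed

lemma fst_bd: "norm (fst U) \<le> norm U" by (metis norm_fst_le prod.collapse)
lemma snd_bd: "\<bar>snd U\<bar> \<le> norm U" by (metis norm_snd_le prod.collapse real_norm_def)

lemma bd_aux:
  assumes k0: "norm v \<le> n * norm (fst W)" and n0: "0 \<le> n"
  shows "\<bar>snd U\<bar> * norm v \<le> norm U * (n * norm W)"
proof -
  have "n * norm (fst W) \<le> n * norm W" using fst_bd[of W] n0 by (rule mult_left_mono)
  then have k: "norm v \<le> n * norm W" using k0 by linarith
  show ?thesis by (rule mult_mono[OF snd_bd k]) simp_all
qed

lemma bd_aux2:
  assumes k0: "norm v \<le> n * norm (fst W)" and n0: "0 \<le> n"
  shows "norm (fst U) * norm v \<le> norm U * (n * norm W)"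
proof -
  have "n * norm (fst W) \<le> n * norm W" using fst_bd[of W] n0 by (rule mult_left_mono)
  then have k: "norm v \<le> n * norm W" using k0 by linarith
  show ?thesis by (rule mult_mono[OF fst_bd k]) simp_all
qed

lemma nab_bd: "norm (nab C U W) \<le> 3 * nC C * norm U * norm W"
proof -
  let ?n = "nC C"
  have n0: "?n \<ge> 0" by (rule nC_nonneg)
  have a: "norm (snd U *\<^sub>R (Km C *v fst W)) \<le> ?n * norm U * norm W"
    using bd_aux[where U=U and W=W, OF Km_bd n0] by (simp add: ac_simps)
  have b: "norm (snd W *\<^sub>R (Sm C *v fst U)) \<le> ?n * norm U * norm W"
    using bd_aux[where U=W and W=U, OF Sm_bd n0] by (simp add: ac_simps)
  have c: "\<bar>inner (fst U) (Sm C *v fst W)\<bar> \<le> ?n * norm U * norm W"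
  proof -
    have "\<bar>inner (fst U) (Sm C *v fst W)\<bar> \<le> norm (fst U) * norm (Sm C *v fst W)" by (rule Cauchy_Schwarz_ineq2)
    also have "\<dots> \<le> norm U * (?n * norm W)" by (rule bd_aux2[OF Sm_bd n0])
    finally show ?thesis by (simp add: ac_simps)
  qed
  have "norm (nab C U W) \<le> norm (snd U *\<^sub>R (Km C *v fst W) - snd W *\<^sub>R (Sm C *v fst U)) + norm (inner (fst U) (Sm C *v fst W))"
    unfolding nab_def by (rule norm_Pair_le)
  moreover have "norm (snd U *\<^sub>R (Km C *v fst W) - snd W *\<^sub>R (Sm C *v fst U)) \<le> norm (snd U *\<^sub>R (Km C *v fst W)) + norm (snd W *\<^sub>R (Sm C *v fst U))"
    by (rule norm_triangle_ineq4)
  moreover have "norm (inner (fst U) (Sm C *v fst W)) = \<bar>inner (fst U) (Sm C *v fst W)\<bar>" by simp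
  ultimately show ?thesis using a b c by linarith
qed

lemma br_bd: "norm (solv_bracket C U W) \<le> 2 * nC C * norm U * norm W"
proof -
  let ?n = "nC C"
  have n0: "?n \<ge> 0" by (rule nC_nonneg)
  have a: "norm (snd U *\<^sub>R (C *v fst W)) \<le> ?n * norm U * norm W"
    using bd_aux[where U=U and W=W, OF frob1 n0] by (simp add: ac_simps)
  have b: "norm (snd W *\<^sub>R (C *v fst U)) \<le> ?n * norm U * norm W"
    using bd_aux[where U=W and W=U, OF frob1 n0] by (simp add: ac_simps)
  have "norm (solv_bracket C U W) = norm (snd U *\<^sub>R (C *v fst W) - snd W *\<^sub>R (C *v fst U))"
    unfolding solv_bracket_def by simp
  also have "\<dots> \<le> norm (snd U *\<^sub>R (C *v fst W)) + norm (snd W *\<^sub>R (C *v fst U))"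
    by (rule norm_triangle_ineq4)
  finally show ?thesis using a b by linarith
qed

lemma Rc_bd: "norm (Rc C X Y Z) \<le> 24 * (nC C)^2 * norm X * norm Y * norm Z"
proof -
  let ?n = "nC C"
  have n0: "?n \<ge> 0" by (rule nC_nonneg)
  have t1: "norm (nab C X (nab C Y Z)) \<le> 9 * ?n^2 * norm X * norm Y * norm Z"
  proof -
    have "norm (nab C X (nab C Y Z)) \<le> 3 * ?n * norm X * norm (nab C Y Z)" by (rule nab_bd)
    also have "\<dots> \<le> 3 * ?n * norm X * (3 * ?n * norm Y * norm Z)"
      using n0 by (intro mult_left_mono nab_bd) auto
    finally show ?thesis by (simp add: power2_eq_square ac_simps)
  qed
  have t2: "norm (nab C Y (nab C X Z)) \<le> 9 * ?n^2 * norm X * norm Y * norm Z"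
  proof -
    have "norm (nab C Y (nab C X Z)) \<le> 3 * ?n * norm Y * norm (nab C X Z)" by (rule nab_bd)
    also have "\<dots> \<le> 3 * ?n * norm Y * (3 * ?n * norm X * norm Z)"
      using n0 by (intro mult_left_mono nab_bd) auto
    finally show ?thesis by (simp add: power2_eq_square ac_simps)
  qed
  have t3: "norm (nab C (solv_bracket C X Y) Z) \<le> 6 * ?n^2 * norm X * norm Y * norm Z"
  proof -
    have "norm (nab C (solv_bracket C X Y) Z) \<le> 3 * ?n * norm (solv_bracket C X Y) * norm Z" by (rule nab_bd)
    also have "\<dots> \<le> 3 * ?n * (2 * ?n * norm X * norm Y) * norm Z"
      using n0 by (intro mult_left_mono mult_right_mono br_bd) auto
    finally show ?thesis by (simp add: power2_eq_square ac_simps)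
  qed
  have "norm (Rc C X Y Z) \<le> norm (nab C X (nab C Y Z)) + norm (nab C Y (nab C X Z)) + norm (nab C (solv_bracket C X Y) Z)"
  proof -
    have "norm (Rc C X Y Z) \<le> norm (nab C X (nab C Y Z) - nab C Y (nab C X Z)) + norm (nab C (solv_bracket C X Y) Z)"
      unfolding Rc_eq by (rule norm_triangle_ineq4)
    moreover have "norm (nab C X (nab C Y Z) - nab C Y (nab C X Z)) \<le> norm (nab C X (nab C Y Z)) + norm (nab C Y (nab C X Z))"
      by (rule norm_triangle_ineq4)
    ultimately show ?thesis by linarith
  qed
  then show ?thesis using t1 t2 t3 by linarith
qed

lemma sec_eq: "sec_curv (solv_bracket C) inner X Y = inner (Rc C X Y Y) X / (inner X X * inner Y Y - (inner X Y)^2)"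
  unfolding sec_curv_def Rc_def ..

lemma sec_bd:
  assumes D: "inner X X * inner Y Y - (inner X Y)^2 \<noteq> 0"
  shows "\<bar>sec_curv (solv_bracket C) inner X Y\<bar> \<le> 24 * (nC C)^2"
proof -
  define D where "D = inner X X * inner Y Y - (inner X Y)^2"
  have "(inner X Y)^2 \<le> inner X X * inner Y Y" by (rule Cauchy_Schwarz_ineq)
  then have Dpos: "D > 0" using D unfolding D_def by linarith
  have X0: "inner X X \<noteq> 0" using D by auto
  define c where "c = inner X Y / inner X X"
  define Y' where "Y' = Y - c *\<^sub>R X"
  have "inner Y' Y' = inner Y Y - 2 * c * inner X Y + c^2 * inner X X"
    unfolding Y'_def by (simp add: inner_diff_left inner_diff_right inner_commute power2_eq_square algebra_simps)
  then have DY: "inner X X * inner Y' Y' = D"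
    unfolding D_def c_def using X0 by (simp add: field_simps power2_eq_square)
  have "\<bar>inner (Rc C X Y Y) X\<bar> = \<bar>inner (Rc C X Y' Y') X\<bar>"
    unfolding Y'_def by (simp add: Rm_gs)
  also have "\<dots> \<le> norm (Rc C X Y' Y') * norm X" by (rule Cauchy_Schwarz_ineq2)
  also have "\<dots> \<le> (24 * (nC C)^2 * norm X * norm Y' * norm Y') * norm X"
    by (intro mult_right_mono Rc_bd) auto
  also have "\<dots> = 24 * (nC C)^2 * (inner X X * inner Y' Y')"
    by (simp add: power2_norm_eq_inner[symmetric] power2_eq_square ac_simps)
  also have "\<dots> = 24 * (nC C)^2 * D" using DY by simp
  finally have "\<bar>inner (Rc C X Y Y) X\<bar> \<le> 24 * (nC C)^2 * D" .
  then show ?thesis unfolding sec_eq D_def[symmetric] using Dpos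
    by (simp add: abs_div divide_le_eq)
qed

lemma mv_axis: "((M::real^'n^'n) *v axis j 1) $ i = M $ i $ j"
  unfolding matrix_vector_mult_def axis_def
  by (auto simp: if_distrib if_distribR sum.delta'[OF finite] sum.delta[OF finite] cong: if_cong)

lemma matrix_add_rdistrib': "((A::real^'n^'n) + B) ** C = A ** C + B ** C"
  by (vector matrix_matrix_mult_def sum.distrib[symmetric] field_simps)

lemma mv_uminus: "(A::real^'n^'n) *v (- x) = - (A *v x)"
  by (metis add.inverse_inverse diff_0 matrix_vector_mult_0_right matrix_vector_mult_diff_distrib)

lemma sec_i: fixes C :: "real^'n^'n" shows "sec_curv (solv_bracket C) inner (axis i 1, 0) (0, 1) = (Km C ** Sm C) $ i $ i - (Sm C ** C) $ i $ i"
proof -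
  have "inner (Rc C (x,0) (0,1) (0,1)) (x,0) = inner x (Km C *v (Sm C *v x)) - inner x (Sm C *v (C *v x))" for x :: "real^'n"
    unfolding Rc_eq nab_def solv_bracket_def by (simp add: inner_diff_left inner_diff_right matrix_vector_mult_diff_distrib mv_uminus inner_commute)
  then show ?thesis unfolding sec_eq
    by (simp add: matrix_vector_mul_assoc inner_commute[of "axis i 1"] cart_eq_inner_axis[symmetric] mv_axis)
qed

lemma trace_scaleR: "trace (c *\<^sub>R (A::real^'n^'n)) = c * trace A"
  by (simp add: trace_def sum_distrib_left)

lemma trace_transpose: "trace (transpose (A::real^'n^'n)) = trace A"
  by (simp add: trace_def transpose_def)

lemma SK: "Sm C + Km C = C"
  unfolding Sm_def Km_def by (simp add: vec_eq_iff field_simps)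

lemma sum_sec: "(\<Sum>i\<in>UNIV. sec_curv (solv_bracket C) inner (axis i 1, 0) (0, 1)) = - trace (Sm C ** Sm C)"
proof -
  have "(\<Sum>i\<in>UNIV. sec_curv (solv_bracket C) inner (axis i 1, 0) (0, 1)) = trace (Km C ** Sm C) - trace (Sm C ** C)"
    by (simp add: sec_i trace_def sum_subtractf)
  also have "trace (Sm C ** C) = trace (Sm C ** Sm C) + trace (Sm C ** Km C)"
    by (metis SK matrix_add_ldistrib trace_add)
  also have "trace (Sm C ** Km C) = trace (Km C ** Sm C)" by (rule trace_mul_sym)
  finally show ?thesis by simp
qed

lemma trace_SS: "trace (C ** transpose C) = 2 * trace (Sm C ** Sm C) - trace (C ** C)"
proof -
  let ?T = "transpose C"
  have "Sm C ** Sm C = (1/4) *\<^sub>R ((C + ?T) ** (C + ?T))"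
    unfolding Sm_def by (simp add: matrix_scalar_ac scalar_matrix_assoc[symmetric])
  then have "trace (Sm C ** Sm C) = (1/4) * (trace (C ** C) + trace (C ** ?T) + trace (?T ** C) + trace (?T ** ?T))"
    by (simp add: trace_scaleR matrix_add_ldistrib matrix_add_rdistrib' trace_add)
  moreover have "trace (?T ** ?T) = trace (C ** C)"
    by (metis matrix_transpose_mul trace_transpose)
  moreover have "trace (?T ** C) = trace (C ** ?T)" by (rule trace_mul_sym)
  ultimately show ?thesis by simp
qed

lemma Cmodel:
  fixes C :: "real^'n^'n"
  defines "a \<equiv> sup_abs_sec_curv (solv_bracket C) inner"
  shows "0 \<le> a" "a \<le> 24 * trace (C ** transpose C)"
    "trace (C ** transpose C) \<le> 2 * real CARD('n) * a - trace (C ** C)"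
proof -
  define S where "S = {\<bar>sec_curv (solv_bracket C) inner X Y\<bar> | X Y. inner X X * inner Y Y - (inner X Y)^2 \<noteq> 0}"
  have aS: "a = Sup S" unfolding a_def sup_abs_sec_curv_def S_def ..
  have n2: "(nC C)^2 = trace (C ** transpose C)" unfolding nC_def using trace_AAT_nonneg by simp
  have bd: "s \<le> 24 * trace (C ** transpose C)" if "s \<in> S" for s
  proof -
    from that obtain X Y where "s = \<bar>sec_curv (solv_bracket C) inner X Y\<bar>" "inner X X * inner Y Y - (inner X Y)^2 \<noteq> 0"
      unfolding S_def by blast
    then show ?thesis using sec_bd[of X Y C] n2 by simp
  qed
  have mem: "\<bar>sec_curv (solv_bracket C) inner (axis i 1, 0) (0, 1)\<bar> \<in> S" for i :: 'n
    unfolding S_def mem_Collect_eq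
    apply (rule_tac x="(axis i 1, 0)" in exI, rule_tac x="(0::real^'n, 1::real)" in exI)
    by (simp add: inner_axis_axis)
  have bdd: "bdd_above S" by (rule bdd_aboveI[where M="24 * trace (C ** transpose C)"]) (rule bd)
  have ne: "S \<noteq> {}" using mem by blast
  have up: "\<bar>sec_curv (solv_bracket C) inner (axis i 1, 0) (0, 1)\<bar> \<le> a" for i :: 'n
    unfolding aS using mem bdd by (intro cSup_upper) auto
  show "0 \<le> a" using up[of undefined] by linarith
  show "a \<le> 24 * trace (C ** transpose C)" unfolding aS using ne bd by (intro cSup_least) auto
  have "trace (Sm C ** Sm C) = - (\<Sum>i\<in>UNIV. sec_curv (solv_bracket C) inner (axis i 1, 0) (0, 1))"
    by (simp only: sum_sec[of C] minus_minus)
  also have "\<dots> \<le> (\<Sum>i\<in>UNIV. \<bar>sec_curv (solv_bracket C) inner (axis i 1, 0) (0, 1)\<bar>)"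
    by (rule order_trans[OF abs_ge_minus_self sum_abs])
  also have "\<dots> \<le> (\<Sum>i\<in>(UNIV::'n set). a)" by (intro sum_mono up)
  also have "\<dots> = real CARD('n) * a" by simp
  finally show "trace (C ** transpose C) \<le> 2 * real CARD('n) * a - trace (C ** C)"
    using trace_SS[of C] by linarith
qed

lemma matrix_inv_props:
  assumes "invertible (P::real^'n^'n)"
  shows "P ** matrix_inv P = mat 1" "matrix_inv P ** P = mat 1"
proof -
  have "\<exists>A'. P ** A' = mat 1 \<and> A' ** P = mat 1" using assms unfolding invertible_def by blast
  then have "P ** matrix_inv P = mat 1 \<and> matrix_inv P ** P = mat 1"
    unfolding matrix_inv_def by (rule someI_ex)
  then show "P ** matrix_inv P = mat 1" "matrix_inv P ** P = mat 1" by auto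
qed

lemma frame_BP:
  assumes hC: "\<forall>i. B *v V i = (\<Sum>j\<in>UNIV. C $ j $ i *\<^sub>R V j)"
  shows "B ** frame_matrix V = frame_matrix V ** (C::real^'n^'n)"
proof -
  have "(B ** frame_matrix V) $ k $ i = (frame_matrix V ** C) $ k $ i" for k i
  proof -
    have "(B ** frame_matrix V) $ k $ i = (B *v V i) $ k"
      by (simp add: frame_matrix_def matrix_matrix_mult_def matrix_vector_mult_def)
    also have "\<dots> = (\<Sum>j\<in>UNIV. C $ j $ i *\<^sub>R V j) $ k" using hC by simp
    also have "\<dots> = (frame_matrix V ** C) $ k $ i"
      by (simp add: frame_matrix_def matrix_matrix_mult_def sum_component mult.commute)
    finally show ?thesis .
  qed
  then show ?thesis by (simp add: vec_eq_iff)
qed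

lemma Bmodel:
  fixes B C :: "real^'n^'n" and V :: "'n \<Rightarrow> real^'n"
  assumes inv: "invertible (frame_matrix V)"
    and hC: "\<forall>i. B *v V i = (\<Sum>j\<in>UNIV. C $ j $ i *\<^sub>R V j)"
  shows "sup_abs_sec_curv (solv_bracket B) (frame_metric V) = sup_abs_sec_curv (solv_bracket C) inner"
    "trace (C ** C) = trace (B ** B)"
proof -
  define P where "P = frame_matrix V"
  define Q where "Q = matrix_inv P"
  have PQ: "P ** Q = mat 1" and QP: "Q ** P = mat 1"
    using matrix_inv_props[OF inv] unfolding P_def Q_def by auto
  have BP: "B ** P = P ** C" unfolding P_def by (rule frame_BP[OF hC])
  have QB: "Q ** B = C ** Q"
  proof -
    have "Q ** B = Q ** B ** (P ** Q)" by (simp add: PQ)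
    also have "\<dots> = Q ** (B ** P) ** Q" by (simp add: matrix_mul_assoc)
    also have "\<dots> = (Q ** P) ** C ** Q" by (simp add: BP matrix_mul_assoc)
    finally show ?thesis by (simp add: QP)
  qed
  have CQBP: "C = Q ** B ** P"
  proof -
    have "Q ** B ** P = C ** (Q ** P)" by (simp add: QB matrix_mul_assoc)
    then show ?thesis by (simp add: QP)
  qed
  have "C ** C = (Q ** B) ** (P ** Q) ** (B ** P)" by (simp add: CQBP matrix_mul_assoc)
  also have "\<dots> = Q ** ((B ** B) ** P)" by (simp add: PQ matrix_mul_assoc)
  finally have "trace (C ** C) = trace (Q ** ((B ** B) ** P))" by simp
  also have "\<dots> = trace (((B ** B) ** P) ** Q)" by (rule trace_mul_sym)
  also have "\<dots> = trace (B ** B)" by (simp add: PQ flip: matrix_mul_assoc)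
  finally show "trace (C ** C) = trace (B ** B)" .
  define \<Phi> :: "(real^'n) \<times> real \<Rightarrow> (real^'n) \<times> real" where "\<Phi> u = (Q *v fst u, snd u)" for u
  define \<Psi> :: "(real^'n) \<times> real \<Rightarrow> (real^'n) \<times> real" where "\<Psi> u = (P *v fst u, snd u)" for u
  have inv1: "\<Psi> (\<Phi> x) = x" for x by (simp add: \<Phi>_def \<Psi>_def matrix_vector_mul_assoc PQ)
  have inv2: "\<Phi> (\<Psi> x) = x" for x by (simp add: \<Phi>_def \<Psi>_def matrix_vector_mul_assoc QP)
  have g: "frame_metric V u w = inner (\<Phi> u) (\<Phi> w)" for u w
    by (simp add: frame_metric_def \<Phi>_def Q_def P_def)
  have br: "\<Phi> (solv_bracket B u w) = solv_bracket C (\<Phi> u) (\<Phi> w)" for u w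
    by (simp add: \<Phi>_def solv_bracket_def matrix_vector_mult_diff_distrib matrix_vector_mult_scaleR
        matrix_vector_mul_assoc QB)
  have add: "\<Phi> (a - b) = \<Phi> a - \<Phi> b" for a b
    by (simp add: \<Phi>_def matrix_vector_mult_diff_distrib)
  have lc: "lc_conn (solv_bracket B) (frame_metric V) X Y = \<Psi> (lc_conn (solv_bracket C) inner (\<Phi> X) (\<Phi> Y))" for X Y
  proof (rule lc_transfer[where \<Phi>=\<Phi> and \<Psi>=\<Psi> and g="frame_metric V" and br="solv_bracket B" and br'="solv_bracket C", OF inv1 inv2 g br])
    fix Z show "inner (lc_conn (solv_bracket C) inner (\<Phi> X) (\<Phi> Y)) Z =
      (inner (solv_bracket C (\<Phi> X) (\<Phi> Y)) Z - inner (solv_bracket C (\<Phi> Y) Z) (\<Phi> X) + inner (solv_bracket C Z (\<Phi> X)) (\<Phi> Y)) / 2"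
      unfolding lc_C by (rule half_eq[OF koszul_C])
  qed
  have sec: "sec_curv (solv_bracket B) (frame_metric V) X Y = sec_curv (solv_bracket C) inner (\<Phi> X) (\<Phi> Y)" for X Y
    by (rule sec_transfer[where \<Phi>=\<Phi> and \<Psi>=\<Psi> and g="frame_metric V" and br="solv_bracket B" and br'="solv_bracket C", OF inv2 g br add lc])
  show "sup_abs_sec_curv (solv_bracket B) (frame_metric V) = sup_abs_sec_curv (solv_bracket C) inner"
    by (rule sup_transfer[where \<Phi>=\<Phi> and \<Psi>=\<Psi> and g="frame_metric V" and br="solv_bracket B" and br'="solv_bracket C", OF inv2 g sec])
qed

theorem mainTheorem8:
  assumes "CARD('n::finite) \<ge> 2"
  shows "\<exists>\<tau>::real. \<tau> > 0 \<and>
    (\<forall>(A::real^'n^'n) (B::real^'n^'n). in_SL_Z A \<and> mat_exp B = A \<longrightarrow>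
      (\<exists>\<kappa>::real. \<forall>(V::'n \<Rightarrow> real^'n) (C::real^'n^'n).
         invertible (frame_matrix V) \<and>
         (\<forall>i. B *v V i = (\<Sum>j\<in>UNIV. C $ j $ i *\<^sub>R V j)) \<longrightarrow>
         (let a = sup_abs_sec_curv (solv_bracket B) (frame_metric V) in
            a / \<tau> \<le> trace (C ** transpose C) \<and>
            trace (C ** transpose C) \<le> \<tau> * a + \<kappa>)))"
proof (rule exI[where x="24 + 2 * real CARD('n)"], intro conjI allI impI)
  let ?\<tau> = "24 + 2 * real CARD('n)"
  show "?\<tau> > 0" by simp
  fix A B :: "real^'n^'n"
  assume "in_SL_Z A \<and> mat_exp B = A"
  show "\<exists>\<kappa>::real. \<forall>(V::'n \<Rightarrow> real^'n) (C::real^'n^'n).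
         invertible (frame_matrix V) \<and>
         (\<forall>i. B *v V i = (\<Sum>j\<in>UNIV. C $ j $ i *\<^sub>R V j)) \<longrightarrow>
         (let a = sup_abs_sec_curv (solv_bracket B) (frame_metric V) in
            a / ?\<tau> \<le> trace (C ** transpose C) \<and>
            trace (C ** transpose C) \<le> ?\<tau> * a + \<kappa>)"
  proof (rule exI[where x="- trace (B ** B)"], intro allI impI)
    fix V :: "'n \<Rightarrow> real^'n" and C :: "real^'n^'n"
    assume h: "invertible (frame_matrix V) \<and> (\<forall>i. B *v V i = (\<Sum>j\<in>UNIV. C $ j $ i *\<^sub>R V j))"
    define a where "a = sup_abs_sec_curv (solv_bracket B) (frame_metric V)"
    define t where "t = trace (C ** transpose C)"
    have aC: "a = sup_abs_sec_curv (solv_bracket C) inner" unfolding a_def using Bmodel(1) h by blast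
    have tr: "trace (C ** C) = trace (B ** B)" using Bmodel(2) h by blast
    have a0: "0 \<le> a" unfolding aC by (rule Cmodel(1))
    have a1: "a \<le> 24 * t" unfolding aC t_def by (rule Cmodel(2))
    have a2: "t \<le> 2 * real CARD('n) * a - trace (B ** B)" unfolding aC t_def tr[symmetric] by (rule Cmodel(3))
    have t0: "0 \<le> t" unfolding t_def by (rule trace_AAT_nonneg)
    have m1: "0 \<le> t * (2 * real CARD('n))" using t0 by simp
    have m2: "0 \<le> 24 * a" using a0 by simp
    have "a \<le> t * ?\<tau>" using a1 m1 by (simp add: distrib_left)
    then have c1: "a / ?\<tau> \<le> t" by (simp add: divide_le_eq)
    have "?\<tau> * a = 24 * a + 2 * real CARD('n) * a" by (simp add: distrib_right)
    then have c2: "t \<le> ?\<tau> * a + - trace (B ** B)" using a2 m2 by linarith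
    show "let a = sup_abs_sec_curv (solv_bracket B) (frame_metric V) in
            a / ?\<tau> \<le> trace (C ** transpose C) \<and>
            trace (C ** transpose C) \<le> ?\<tau> * a + - trace (B ** B)"
      unfolding Let_def a_def[symmetric] t_def[symmetric] using c1 c2 by blast
  qed
qed

end
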